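(* In the setting described in the context, suppose that for all $k=1,\dots,d$, $$\frac{1}{\phi-b}\sum_{j\in{\mathcal{V}}\setminus{\mathcal{A}}}\big\|({\bf I}-H_j^\top H_j)e_k\big\|_1<1 .$$ Then for each $j\in{\mathcal{V}}\setminus{\mathcal{A}}$ and each $\lambda\in(0,1)$, $$\lim_{t\to\infty}R_j(\lambda,t)=0\quad\text{almost surely},\qquad\text{where } R_j(\lambda,t)=\sum_{m=0}^{t-1}\lambda^m\Big\|\frac{1}{t-m}\sum_{r=1}^{t-m}w_j(r)\Big\| .$$
   Context: Agents ${\mathcal{V}}=\{1,\dots,n\}$; an unknown vector $\theta^*\in\mathbb{R}^d$; agent $i$ has a matrix $H_i\in\mathbb{R}^{n_i\times d}$ and observes $y_i(t)=H_i\theta^*+w_i(t)$ at times $t=1,2,\dots$. For each agent $i$, the noise sequence $(w_i(t))_{t\ge1}$ is i.i.d. with $\mathbb{E}[w_i(t)]=0$ and $\mathbb{E}[w_i(t)w_i(t)^\top]=\Sigma_i$, and there is a constant $C>0$ with $\Pr(\|w_i(t)\|\le C)=1$ for all $i,t$; noise sequences of distinct agents are independent. An unknown set ${\mathcal{A}}\subseteq{\mathcal{V}}$ of Byzantine (faulty) agents has $|{\mathcal{A}}|\le b$, and $\phi=|{\mathcal{V}}\setminus{\mathcal{A}}|$. $\|\cdot\|$ is the Euclidean norm, $\|\cdot\|_1$ the $\ell_1$ norm, $e_k$ the $k$-th standard basis vector, ${\bf I}$ the $d\times d$ identity. *)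

theory Defs
  imports "HOL-Probability.Probability"
begin

text \<open>Finite-dimensional vectors are represented as functions nat \<Rightarrow> real,
  whose relevant components are those with index below the dimension.\<close>

definition vnorm :: "nat \<Rightarrow> (nat \<Rightarrow> real) \<Rightarrow> real" where
  "vnorm n x = sqrt (\<Sum>k<n. (x k)^2)"

definition vnorm1 :: "nat \<Rightarrow> (nat \<Rightarrow> real) \<Rightarrow> real" where
  "vnorm1 n x = (\<Sum>k<n. \<bar>x k\<bar>)"

definition col_I_minus_HtH :: "nat \<Rightarrow> (nat \<Rightarrow> nat \<Rightarrow> real) \<Rightarrow> nat \<Rightarrow> nat \<Rightarrow> real" where
  "col_I_minus_HtH nrow H k = (\<lambda>i. (if i = k then 1 else 0) - (\<Sum>l<nrow. H l i * H l k))"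

definition Rfun :: "nat \<Rightarrow> (nat \<Rightarrow> nat \<Rightarrow> real) \<Rightarrow> real \<Rightarrow> nat \<Rightarrow> real" where
  "Rfun n w lam t = (\<Sum>m<t. lam ^ m *
      vnorm n (\<lambda>k. (1 / real (t - m)) * (\<Sum>r=1..t - m. w r k)))"

end

theory Submission
  imports Defs "HOL-Probability.Hoeffding"
begin

lemma (in prob_space) slln_bounded:
  fixes X :: "nat \<Rightarrow> 'a \<Rightarrow> real" and C :: real
  assumes indep: "indep_vars (\<lambda>_. borel) X {1..}"
    and bnd: "\<And>r. r \<ge> 1 \<Longrightarrow> AE x in M. \<bar>X r x\<bar> \<le> C"
    and Cpos: "C > 0"
    and ex0: "\<And>r. r \<ge> 1 \<Longrightarrow> expectation (X r) = 0"
  shows "AE x in M. (\<lambda>n. (1 / real n) * (\<Sum>r=1..n. X r x)) \<longlonglongrightarrow> 0"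
proof -
  have rv[measurable]: "X r \<in> borel_measurable M" if "r \<ge> 1" for r
    using indep that unfolding indep_vars_def by auto
  have key: "AE x in M. eventually (\<lambda>n. \<bar>\<Sum>r=1..n. X r x\<bar> < real n / real (Suc q)) sequentially" for q :: nat
  proof -
    define e where "e = 1 / real (Suc q)"
    have e: "e > 0" by (simp add: e_def)
    define A where "A n = {x\<in>space M. \<bar>(\<Sum>r\<in>{1..n}. X r x) - 0\<bar> \<ge> real n * e}" for n
    define c where "c = e^2 / (2 * C^2)"
    have c: "c > 0" using e Cpos by (simp add: c_def)
    have Ameas: "A n \<in> sets M" for n
      unfolding A_def by measurable
    have Abnd: "measure M (A n) \<le> 2 * exp (- c) ^ n" for n
    proof (cases "n = 0")
      case True then show ?thesis using prob_le_1[of "A 0"] by (simp del: prob_le_1)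
    next
      case False
      interpret H: Hoeffding_ineq M "{1..n}" X "\<lambda>_. -C" "\<lambda>_. C" 0
      proof unfold_locales
        show "indep_vars (\<lambda>_. borel) X {1..n}"
          by (rule indep_vars_subset[OF indep]) auto
        show "AE x in M. X i x \<in> {- C..C}" if "i \<in> {1..n}" for i
          using bnd[of i] that by (auto elim!: eventually_mono)
        show "0 \<equiv> \<Sum>i\<in>{1..n}. expectation (X i)" using ex0 by simp
      qed auto
      have s: "(\<Sum>i\<in>{1..n}. (C - - C)\<^sup>2) = real n * (4 * C^2)"
        by (simp add: power2_eq_square algebra_simps)
      have "measure M (A n) \<le> 2 * exp (-2 * (real n * e)\<^sup>2 / (\<Sum>i\<in>{1..n}. (C - - C)\<^sup>2))"
        unfolding A_def
        apply (rule H.Hoeffding_ineq_abs_ge)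
        using e False Cpos s by auto
      also have "-2 * (real n * e)\<^sup>2 / (\<Sum>i\<in>{1..n}. (C - - C)\<^sup>2) = real n * (- c)"
        using False Cpos unfolding s c_def by (simp add: field_simps power2_eq_square)
      also have "exp (real n * (- c)) = exp (-c) ^ n"
        by (metis exp_of_nat_mult mult_minus_right)
      finally show ?thesis .
    qed
    have "summable (\<lambda>n. 2 * exp (- c) ^ n)"
      using c by (intro summable_mult summable_geometric) auto
    then have summ: "summable (\<lambda>n. measure M (A n))"
      by (rule summable_comparison_test') (use Abnd in auto)
    have "AE x in M. eventually (\<lambda>n. x \<in> space M - A n) sequentially"
      by (rule borel_cantelli_AE1[OF Ameas _ summ]) (auto simp: emeasure_eq_measure)
    then show ?thesis
      by eventually_elim (auto elim!: eventually_mono simp: A_def e_def field_simps)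
  qed
  then have "AE x in M. \<forall>q. eventually (\<lambda>n. \<bar>\<Sum>r=1..n. X r x\<bar> < real n / real (Suc q)) sequentially"
    by (simp add: AE_all_countable)
  then show ?thesis
  proof eventually_elim
    case (elim x)
    show ?case
    proof (rule LIMSEQ_I)
      fix r :: real assume "r > 0"
      then obtain q where q: "1 / real (Suc q) < r"
        using nat_approx_posE by blast
      from elim[rule_format, of q] obtain N where N: "\<And>n. n \<ge> N \<Longrightarrow> \<bar>\<Sum>r=1..n. X r x\<bar> < real n / real (Suc q)"
        by (auto simp: eventually_sequentially)
      show "\<exists>no. \<forall>n\<ge>no. norm (1 / real n * (\<Sum>r = 1..n. X r x) - 0) < r"
      proof (intro exI[of _ "Suc N"] allI impI)
        fix n assume n: "Suc N \<le> n"
        then have np: "real n > 0" by simp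
        have "norm (1 / real n * (\<Sum>r = 1..n. X r x) - 0) = \<bar>\<Sum>r=1..n. X r x\<bar> / real n"
          by (simp add: abs_mult)
        also have "\<dots> < 1 / real (Suc q)"
          using N[of n] n np by (simp add: divide_simps)
        finally show "norm (1 / real n * (\<Sum>r = 1..n. X r x) - 0) < r" using q by simp
      qed
    qed
  qed
qed

lemma conv_lemma:
  fixes g :: "nat \<Rightarrow> real"
  assumes g: "g \<longlonglongrightarrow> 0" and B: "\<And>s. \<bar>g s\<bar> \<le> B" and lam: "0 < lam" "lam < 1"
  shows "(\<lambda>t. \<Sum>m<t. lam ^ m * g (t - m)) \<longlonglongrightarrow> 0"
proof -
  define a where "a k t = (if k < t then lam ^ k * g (t - k) else 0)" for k t
  have lim: "(\<lambda>t. a k t) \<longlonglongrightarrow> 0" for k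
  proof -
    have "(\<lambda>t. lam ^ k * g (t - k)) \<longlonglongrightarrow> lam ^ k * 0"
      by (intro tendsto_mult tendsto_const) (rule LIMSEQ_offset[where k = k], simp add: g)
    then have "(\<lambda>t. lam ^ k * g (t - k)) \<longlonglongrightarrow> 0" by simp
    moreover have "eventually (\<lambda>t. lam ^ k * g (t - k) = a k t) sequentially"
      unfolding a_def eventually_sequentially by (intro exI[of _ "Suc k"]) auto
    ultimately show ?thesis by (rule Lim_transform_eventually)
  qed
  have bnd: "eventually (\<lambda>(k,t). norm (a k t) \<le> lam ^ k * B) (at_top \<times>\<^sub>F sequentially)"
  proof (intro always_eventually allI)
    fix p :: "nat \<times> nat"
    obtain k t where p: "p = (k, t)" by force
    have "B \<ge> 0" using B[of 0] by linarith
    then show "(\<lambda>(k,t). norm (a k t) \<le> lam ^ k * B) p"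
      using B[of "t - k"] lam unfolding p a_def
      by (auto simp: abs_mult intro: mult_left_mono)
  qed
  have summ: "summable (\<lambda>k. lam ^ k * B)"
    using lam by (intro summable_mult2 summable_geometric) auto
  have "(\<lambda>t. suminf (\<lambda>k. a k t)) \<longlonglongrightarrow> suminf (\<lambda>k. 0::real)"
    using tannerys_theorem[OF lim bnd summ] by simp
  moreover have "suminf (\<lambda>k. a k t) = (\<Sum>m<t. lam ^ m * g (t - m))" for t
    by (subst suminf_finite[of "{..<t}"]) (auto simp: a_def)
  ultimately show ?thesis by simp
qed

lemma comp_le_vnorm: "k < n \<Longrightarrow> \<bar>v k\<bar> \<le> vnorm n v"
  unfolding vnorm_def
  by (metis real_sqrt_abs real_sqrt_le_mono member_le_sum finite_lessThan lessThan_iff zero_le_power2)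

lemma avg_bound:
  fixes f :: "nat \<Rightarrow> real"
  assumes "\<And>r. r \<ge> 1 \<Longrightarrow> \<bar>f r\<bar> \<le> C" "C \<ge> 0"
  shows "\<bar>(1 / real s) * (\<Sum>r=1..s. f r)\<bar> \<le> C"
proof (cases "s = 0")
  case True then show ?thesis using assms by simp
next
  case False
  have "\<bar>\<Sum>r=1..s. f r\<bar> \<le> (\<Sum>r=1..s. \<bar>f r\<bar>)" by (rule sum_abs)
  also have "\<dots> \<le> (\<Sum>r=1..s. C)" by (intro sum_mono) (use assms in auto)
  also have "\<dots> = real s * C" by simp
  finally show ?thesis using False by (simp add: abs_mult field_simps)
qed


theorem lemma2:
  fixes M :: "'a measure"
    and N d b :: nat
    and A :: "nat set"
    and nr :: "nat \<Rightarrow> nat"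
    and H :: "nat \<Rightarrow> nat \<Rightarrow> nat \<Rightarrow> real"
    and w :: "nat \<Rightarrow> nat \<Rightarrow> 'a \<Rightarrow> nat \<Rightarrow> real"
    and Sigma :: "nat \<Rightarrow> nat \<Rightarrow> nat \<Rightarrow> real"
    and C :: real
  defines "V \<equiv> {1..N}"
  defines "phi \<equiv> card (V - A)"
  assumes P: "prob_space M"
    and meas: "\<And>i t k. i \<in> V \<Longrightarrow> t \<ge> 1 \<Longrightarrow> k < nr i \<Longrightarrow>
                 (\<lambda>\<omega>. w i t \<omega> k) \<in> borel_measurable M"
    and iid_indep: "\<And>i. i \<in> V \<Longrightarrow> prob_space.indep_vars M (\<lambda>_. PiM {..<nr i} (\<lambda>_. borel))
                 (\<lambda>t \<omega>. restrict (w i t \<omega>) {..<nr i}) {1..}"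
    and iid_distr: "\<And>i t. i \<in> V \<Longrightarrow> t \<ge> 1 \<Longrightarrow>
                 distr M (PiM {..<nr i} (\<lambda>_. borel)) (\<lambda>\<omega>. restrict (w i t \<omega>) {..<nr i})
               = distr M (PiM {..<nr i} (\<lambda>_. borel)) (\<lambda>\<omega>. restrict (w i 1 \<omega>) {..<nr i})"
    and mean0: "\<And>i t k. i \<in> V \<Longrightarrow> t \<ge> 1 \<Longrightarrow> k < nr i \<Longrightarrow>
                 integrable M (\<lambda>\<omega>. w i t \<omega> k) \<and> (\<integral>\<omega>. w i t \<omega> k \<partial>M) = 0"
    and cov: "\<And>i t k l. i \<in> V \<Longrightarrow> t \<ge> 1 \<Longrightarrow> k < nr i \<Longrightarrow> l < nr i \<Longrightarrow>
                 (\<integral>\<omega>. w i t \<omega> k * w i t \<omega> l \<partial>M) = Sigma i k l"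
    and Cpos: "C > 0"
    and bdd: "\<And>i t. i \<in> V \<Longrightarrow> t \<ge> 1 \<Longrightarrow>
                 prob_space.prob M {\<omega> \<in> space M. vnorm (nr i) (w i t \<omega>) \<le> C} = 1"
    and indep_agents: "prob_space.indep_vars M
                 (\<lambda>i. PiM {1..} (\<lambda>_. PiM {..<nr i} (\<lambda>_. borel)))
                 (\<lambda>i \<omega>. \<lambda>t\<in>{1..}. restrict (w i t \<omega>) {..<nr i}) V"
    and A_sub: "A \<subseteq> V"
    and A_card: "card A \<le> b"
    and cond: "\<And>k. k < d \<Longrightarrow>
                 (1 / (real phi - real b)) *
                   (\<Sum>j\<in>V - A. vnorm1 d (col_I_minus_HtH (nr j) (H j) k)) < 1"
  shows "\<forall>j\<in>V - A. \<forall>lam\<in>{0<..<1::real}.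
           AE \<omega> in M. (\<lambda>t. Rfun (nr j) (\<lambda>r. w j r \<omega>) lam t) \<longlonglongrightarrow> 0"
proof (intro ballI)
  fix j lam assume j: "j \<in> V - A" and lam: "lam \<in> {0<..<1::real}"
  interpret prob_space M by (rule P)
  have jV: "j \<in> V" using j by auto
  define n where "n = nr j"
  have AEb: "AE x in M. vnorm n (w j r x) \<le> C" if "r \<ge> 1" for r
    using AE_prob_1[OF bdd[OF jV that]] by (auto simp: n_def elim!: eventually_mono)
  have comp: "AE x in M. (\<lambda>s. (1 / real s) * (\<Sum>r=1..s. w j r x k)) \<longlonglongrightarrow> 0" if k: "k < n" for k
  proof (rule slln_bounded)
    have "indep_vars (\<lambda>_. borel) (\<lambda>r x. (restrict (w j r x) {..<nr j}) k) {1..}"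
      by (rule indep_vars_compose2[OF iid_indep[OF jV]]) (use k in \<open>auto simp: n_def\<close>)
    then show "indep_vars (\<lambda>_. borel) (\<lambda>r x. w j r x k) {1..}"
      using k by (simp add: n_def)
    show "AE x in M. \<bar>w j r x k\<bar> \<le> C" if "r \<ge> 1" for r
      using AEb[OF that] by eventually_elim (metis comp_le_vnorm[OF k] order_trans)
    show "C > 0" by (rule Cpos)
    show "expectation (\<lambda>x. w j r x k) = 0" if "r \<ge> 1" for r
      using mean0[OF jV that, of k] k by (simp add: n_def)
  qed
  have "AE x in M. \<forall>k. k < n \<longrightarrow> (\<lambda>s. (1 / real s) * (\<Sum>r=1..s. w j r x k)) \<longlonglongrightarrow> 0"
    unfolding AE_all_countable using comp by auto
  moreover have "AE x in M. \<forall>r. r \<ge> 1 \<longrightarrow> vnorm n (w j r x) \<le> C"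
    unfolding AE_all_countable using AEb by auto
  ultimately have "AE x in M. (\<lambda>t. Rfun n (\<lambda>r. w j r x) lam t) \<longlonglongrightarrow> 0"
  proof eventually_elim
    case (elim x)
    define g where "g = (\<lambda>s. vnorm n (\<lambda>k. (1 / real s) * (\<Sum>r=1..s. w j r x k)))"
    have "(\<lambda>s. sqrt (\<Sum>k<n. ((1 / real s) * (\<Sum>r=1..s. w j r x k))^2)) \<longlonglongrightarrow> sqrt (\<Sum>k<n. 0^2)"
      by (intro tendsto_intros) (use elim(1) in auto)
    then have g0: "g \<longlonglongrightarrow> 0" by (simp add: g_def vnorm_def)
    have cb: "\<bar>(1 / real s) * (\<Sum>r=1..s. w j r x k)\<bar> \<le> C" if "k < n" for k s
      by (rule avg_bound) (use elim(2) Cpos in \<open>auto intro: order_trans[OF comp_le_vnorm[OF that]]\<close>)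
    have gB: "\<bar>g s\<bar> \<le> sqrt (real n * C^2)" for s
    proof -
      have "(\<Sum>k<n. ((1 / real s) * (\<Sum>r=1..s. w j r x k))^2) \<le> (\<Sum>k<n. C^2)"
        by (intro sum_mono) (metis cb abs_le_square_iff abs_of_pos Cpos lessThan_iff)
      then show ?thesis by (simp add: g_def vnorm_def sum_nonneg)
    qed
    have "(\<lambda>t. \<Sum>m<t. lam ^ m * g (t - m)) \<longlonglongrightarrow> 0"
      by (rule conv_lemma[OF g0 gB]) (use lam in auto)
    then show ?case by (simp add: Rfun_def g_def)
  qed
  then show "AE \<omega> in M. (\<lambda>t. Rfun (nr j) (\<lambda>r. w j r \<omega>) lam t) \<longlonglongrightarrow> 0"
    by (simp add: n_def)
qed

end
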